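(* Let $X$ be a Hausdorff topological space. Then $X$ is totally disconnected and locally compact if and only if its symmetric pseudogroup $\mathscr{I}(X)$ is algebraic.
   Context: The symmetric pseudogroup $\mathscr{I}(X)$ is the set of all homeomorphisms $f:U\to V$ between open subsets $U=\mathrm{dom}(f)$ and $V$ of $X$, with product: for $f:U\to V$ and $f_1:U_1\to V_1$, $f_1\cdot f : x\mapsto f_1(f(x))$ defined on $f^{-1}(V\cap U_1)$ with values in $f_1(V\cap U_1)$; it is an inverse semigroup with $f^*=f^{-1}$. Its intrinsic order is $f\leqslant g$ iff $f=g|_U$ for some open $U\subseteq\mathrm{dom}(g)$. In a poset, $x$ is way-below $y$ ($x\ll y$) if for every directed subset $D$ (nonempty, any two elements having an upper bound in $D$) that has a supremum with $y\leqslant\sup D$, there is $d\in D$ with $x\leqslant d$. An element $k$ is compact if $k\ll k$; a poset is algebraic if every element is the supremum of the directed set of compact elements below it; $\mathscr{I}(X)$ is algebraic if it is so for its intrinsic order. *)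

theory Defs
  imports "HOL-Analysis.Analysis"
begin

definition totally_disconnected_space :: "'a topology \<Rightarrow> bool" where
  "totally_disconnected_space X \<longleftrightarrow>
     (\<forall>S. S \<subseteq> topspace X \<and> connectedin X S \<longrightarrow> (\<exists>a. S \<subseteq> {a}))"

definition sym_pseudogroup :: "'a topology \<Rightarrow> ('a \<rightharpoonup> 'a) set" where
  "sym_pseudogroup X = {f. openin X (dom f) \<and> openin X (ran f) \<and>
      homeomorphic_map (subtopology X (dom f)) (subtopology X (ran f)) (\<lambda>x. the (f x))}"

definition pg_le :: "('a \<rightharpoonup> 'a) \<Rightarrow> ('a \<rightharpoonup> 'a) \<Rightarrow> bool" where
  "pg_le f g \<longleftrightarrow> f \<subseteq>\<^sub>m g"

definition directed_in :: "'b set \<Rightarrow> ('b \<Rightarrow> 'b \<Rightarrow> bool) \<Rightarrow> 'b set \<Rightarrow> bool" where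
  "directed_in P le D \<longleftrightarrow> D \<subseteq> P \<and> D \<noteq> {} \<and>
     (\<forall>a\<in>D. \<forall>b\<in>D. \<exists>c\<in>D. le a c \<and> le b c)"

definition is_sup_in :: "'b set \<Rightarrow> ('b \<Rightarrow> 'b \<Rightarrow> bool) \<Rightarrow> 'b set \<Rightarrow> 'b \<Rightarrow> bool" where
  "is_sup_in P le D s \<longleftrightarrow> s \<in> P \<and> (\<forall>d\<in>D. le d s) \<and>
     (\<forall>u\<in>P. (\<forall>d\<in>D. le d u) \<longrightarrow> le s u)"

definition way_below_in :: "'b set \<Rightarrow> ('b \<Rightarrow> 'b \<Rightarrow> bool) \<Rightarrow> 'b \<Rightarrow> 'b \<Rightarrow> bool" where
  "way_below_in P le x y \<longleftrightarrow>
     (\<forall>D s. directed_in P le D \<and> is_sup_in P le D s \<and> le y s \<longrightarrow> (\<exists>d\<in>D. le x d))"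

definition compact_elem_in :: "'b set \<Rightarrow> ('b \<Rightarrow> 'b \<Rightarrow> bool) \<Rightarrow> 'b \<Rightarrow> bool" where
  "compact_elem_in P le k \<longleftrightarrow> way_below_in P le k k"

definition algebraic_in :: "'b set \<Rightarrow> ('b \<Rightarrow> 'b \<Rightarrow> bool) \<Rightarrow> bool" where
  "algebraic_in P le \<longleftrightarrow>
     (\<forall>x\<in>P. directed_in P le {k\<in>P. compact_elem_in P le k \<and> le k x} \<and>
             is_sup_in P le {k\<in>P. compact_elem_in P le k \<and> le k x} x)"

end

theory Submission
  imports Defs
begin

lemma sp_restrict:
  assumes f: "f \<in> sym_pseudogroup X" and V: "openin X V"
  shows "f |` V \<in> sym_pseudogroup X"
proof -
  define h where "h = (\<lambda>x. the (f x))"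
  have od: "openin X (dom f)" and orr: "openin X (ran f)"
    and H: "homeomorphic_map (subtopology X (dom f)) (subtopology X (ran f)) h"
    using f by (auto simp: sym_pseudogroup_def h_def)
  define S where "S = dom f \<inter> V"
  have domr: "dom (f |` V) = S" by (auto simp: S_def)
  have ranr: "ran (f |` V) = h ` S"
    by (force simp: S_def h_def ran_def restrict_map_def)
  have Sd: "S \<subseteq> dom f" by (auto simp: S_def)
  have tsd: "topspace (subtopology X (dom f)) = dom f"
    using od openin_subset by (auto simp: topspace_subtopology)
  have tsr: "topspace (subtopology X (ran f)) = ran f"
    using orr openin_subset by (auto simp: topspace_subtopology)
  have hS: "h ` S \<subseteq> ran f"
  proof
    fix y assume "y \<in> h ` S"
    then obtain z where z: "z \<in> S" "y = h z" by auto
    then obtain w where "f z = Some w" using Sd by blast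
    then show "y \<in> ran f" using z by (auto simp: h_def ran_def)
  qed
  have "h ` (topspace (subtopology X (dom f)) \<inter> S) = topspace (subtopology X (ran f)) \<inter> h ` S"
    using tsd tsr Sd hS by auto
  from homeomorphic_map_subtopologies[OF H this]
  have H2: "homeomorphic_map (subtopology X S) (subtopology X (h ` S)) h"
    using Sd hS by (simp add: subtopology_subtopology Int_absorb1 inf.absorb2)
  have oS: "openin X S" using od V by (simp add: S_def openin_Int)
  have "openin (subtopology X (dom f)) S"
    using oS Sd by (metis inf.absorb1 openin_subtopology)
  then have "openin (subtopology X (ran f)) (h ` S)"
    using homeomorphic_map_openness[OF H, of S] Sd tsd by blast
  then have ohS: "openin X (h ` S)" using openin_trans_full orr by blast
  have "homeomorphic_map (subtopology X S) (subtopology X (h ` S)) (\<lambda>x. the ((f |` V) x))"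
  proof (rule homeomorphic_map_eq[OF H2])
    fix x assume "x \<in> topspace (subtopology X S)"
    then have "x \<in> V" by (auto simp: S_def topspace_subtopology)
    then show "h x = the ((f |` V) x)" by (simp add: h_def)
  qed
  then show ?thesis using oS ohS domr ranr by (simp add: sym_pseudogroup_def)
qed

definition idm :: "'a set \<Rightarrow> ('a \<rightharpoonup> 'a)" where
  "idm W = (\<lambda>x. if x \<in> W then Some x else None)"

lemma idm_in:
  assumes "openin X W" shows "idm W \<in> sym_pseudogroup X"
proof -
  have d: "dom (idm W) = W" by (auto simp: idm_def dom_def)
  have r: "ran (idm W) = W" by (auto simp: idm_def ran_def split: if_splits)
  have "homeomorphic_map (subtopology X W) (subtopology X W) (\<lambda>x. the (idm W x))"
    by (rule homeomorphic_map_eq[of _ _ id]) (auto simp: idm_def topspace_subtopology)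
  then show ?thesis using assms d r by (simp add: sym_pseudogroup_def)
qed

lemma upper_finite:
  assumes D: "directed_in P pg_le D" and "finite F" and "F \<subseteq> D"
  shows "\<exists>c\<in>D. \<forall>d\<in>F. pg_le d c"
  using assms(2,3)
proof (induction F rule: finite_induct)
  case empty
  then show ?case using D by (auto simp: directed_in_def)
next
  case (insert a F)
  then obtain c where c: "c \<in> D" "\<forall>d\<in>F. pg_le d c" by auto
  have "a \<in> D" using insert by auto
  then obtain c' where "c' \<in> D" "pg_le a c'" "pg_le c c'"
    using D c unfolding directed_in_def by blast
  then show ?case using c unfolding pg_le_def by (metis insert_iff map_le_trans)
qed

lemma sup_cover:
  assumes Hs: "Hausdorff_space X" and sup: "is_sup_in (sym_pseudogroup X) pg_le D s"
    and x: "x \<in> dom s"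
  shows "\<exists>d\<in>D. x \<in> dom d"
proof (rule ccontr)
  assume nd: "\<not> (\<exists>d\<in>D. x \<in> dom d)"
  have sP: "s \<in> sym_pseudogroup X" using sup by (simp add: is_sup_in_def)
  then have "dom s \<subseteq> topspace X" by (simp add: sym_pseudogroup_def openin_subset)
  then have xt: "x \<in> topspace X" using x by auto
  have "openin X (topspace X - {x})"
    using closedin_Hausdorff_singleton[OF Hs xt] by blast
  then have gP: "s |` (topspace X - {x}) \<in> sym_pseudogroup X"
    using sP sp_restrict by blast
  have "\<forall>d\<in>D. pg_le d (s |` (topspace X - {x}))"
  proof
    fix d assume dD: "d \<in> D"
    then have ds: "d \<subseteq>\<^sub>m s" using sup by (simp add: is_sup_in_def pg_le_def)
    have "x \<notin> dom d" using nd dD by blast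
    moreover have "dom d \<subseteq> topspace X"
      using map_le_implies_dom_le[OF ds] \<open>dom s \<subseteq> topspace X\<close> by blast
    ultimately show "pg_le d (s |` (topspace X - {x}))"
      using ds unfolding pg_le_def map_le_def
    proof (intro ballI)
      fix a assume "x \<notin> dom d" "dom d \<subseteq> topspace X" "\<forall>a\<in>dom d. d a = s a" "a \<in> dom d"
      then have "a \<in> topspace X - {x}" "d a = s a" by auto
      then show "d a = (s |` (topspace X - {x})) a" by simp
    qed
  qed
  then have "pg_le s (s |` (topspace X - {x}))"
    using sup gP by (simp add: is_sup_in_def)
  then have "s x = (s |` (topspace X - {x})) x" using x unfolding pg_le_def map_le_def by blast
  then show False using x by auto
qed

lemma compact_dom:
  assumes kP: "k \<in> sym_pseudogroup X" and kc: "compact_elem_in (sym_pseudogroup X) pg_le k"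
  shows "compactin X (dom k)"
  unfolding compactin_def
proof (intro conjI allI impI)
  show "dom k \<subseteq> topspace X" using kP by (simp add: sym_pseudogroup_def openin_subset)
  fix U assume U: "(\<forall>x\<in>U. openin X x) \<and> dom k \<subseteq> \<Union> U"
  define D where "D = {k |` \<Union>F | F. finite F \<and> F \<subseteq> U}"
  have DP: "D \<subseteq> sym_pseudogroup X"
    using U kP by (auto simp: D_def intro!: sp_restrict openin_Union)
  have mono: "pg_le (k |` A) (k |` B)" if "A \<subseteq> B" for A B
    using that by (auto simp: pg_le_def map_le_def)
  have dir: "directed_in (sym_pseudogroup X) pg_le D"
    unfolding directed_in_def
  proof (intro conjI ballI)
    show "D \<subseteq> sym_pseudogroup X" by (rule DP)
    show "D \<noteq> {}" by (auto simp: D_def)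
    fix a b assume "a \<in> D" "b \<in> D"
    then obtain F1 F2 where "a = k |` \<Union>F1" "finite F1" "F1 \<subseteq> U"
      "b = k |` \<Union>F2" "finite F2" "F2 \<subseteq> U" by (auto simp: D_def)
    note F = this
    then show "\<exists>c\<in>D. pg_le a c \<and> pg_le b c"
    proof (intro bexI[of _ "k |` \<Union>(F1 \<union> F2)"] conjI)
      show "k |` \<Union>(F1 \<union> F2) \<in> D" unfolding D_def using F by blast
    qed (use F in \<open>auto intro!: mono\<close>)
  qed
  have sup: "is_sup_in (sym_pseudogroup X) pg_le D k"
    unfolding is_sup_in_def
  proof (intro conjI ballI impI)
    show "k \<in> sym_pseudogroup X" by (rule kP)
    fix d assume "d \<in> D" then show "pg_le d k"
      by (auto simp: D_def pg_le_def map_le_def restrict_map_def split: if_splits)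
  next
    fix u assume "u \<in> sym_pseudogroup X" and ub: "\<forall>d\<in>D. pg_le d u"
    show "pg_le k u" unfolding pg_le_def map_le_def
    proof (intro ballI)
      fix x assume x: "x \<in> dom k"
      then obtain V where V: "V \<in> U" "x \<in> V" using U by blast
      then have "k |` \<Union>{V} \<in> D" unfolding D_def by blast
      then have "pg_le (k |` V) u" using ub by simp
      then show "k x = u x" using x V unfolding pg_le_def map_le_def
        by (metis domIff restrict_in)
    qed
  qed
  have "pg_le k k" by (simp add: pg_le_def)
  then obtain d where "d \<in> D" "pg_le k d"
    using kc dir sup unfolding compact_elem_in_def way_below_in_def by blast
  then obtain F where F: "finite F" "F \<subseteq> U" "pg_le k (k |` \<Union>F)" by (auto simp: D_def)
  then have "dom k \<subseteq> \<Union>F" using map_le_implies_dom_le unfolding pg_le_def by fastforce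
  then show "\<exists>F. finite F \<and> F \<subseteq> U \<and> dom k \<subseteq> \<Union>F" using F by blast
qed

lemma dom_compact:
  assumes Hs: "Hausdorff_space X" and kP: "k \<in> sym_pseudogroup X" and kc: "compactin X (dom k)"
  shows "compact_elem_in (sym_pseudogroup X) pg_le k"
  unfolding compact_elem_in_def way_below_in_def
proof (intro allI impI)
  fix D s assume a: "directed_in (sym_pseudogroup X) pg_le D \<and>
     is_sup_in (sym_pseudogroup X) pg_le D s \<and> pg_le k s"
  then have dir: "directed_in (sym_pseudogroup X) pg_le D"
    and sup: "is_sup_in (sym_pseudogroup X) pg_le D s" and ks: "k \<subseteq>\<^sub>m s"
    by (simp_all add: pg_le_def)
  have DP: "D \<subseteq> sym_pseudogroup X" using dir by (simp add: directed_in_def)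
  have cov: "dom k \<subseteq> \<Union>(dom ` D)"
  proof
    fix x assume "x \<in> dom k"
    then have "x \<in> dom s" using map_le_implies_dom_le[OF ks] by blast
    then obtain d where "d \<in> D" "x \<in> dom d" using sup_cover[OF Hs sup] by blast
    then show "x \<in> \<Union>(dom ` D)" by blast
  qed
  have "\<forall>x\<in>dom ` D. openin X x" using DP by (auto simp: sym_pseudogroup_def)
  then have "(\<forall>x\<in>dom ` D. openin X x) \<and> dom k \<subseteq> \<Union>(dom ` D)" using cov by blast
  from kc[unfolded compactin_def, THEN conjunct2, rule_format, OF this]
  obtain F where F: "finite F" "F \<subseteq> dom ` D" "dom k \<subseteq> \<Union>F" by blast
  from finite_subset_image[OF F(1,2)]
  obtain G where G: "G \<subseteq> D" "finite G" "F = dom ` G" by blast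
  then obtain c where c: "c \<in> D" "\<forall>g\<in>G. pg_le g c"
    using upper_finite[OF dir G(2) G(1)] by blast
  have UF: "\<Union>F \<subseteq> dom c"
  proof
    fix x assume "x \<in> \<Union>F"
    then obtain A where A: "A \<in> F" "x \<in> A" by blast
    then obtain g where g: "g \<in> G" "A = dom g" using G(3) by blast
    then have "g \<subseteq>\<^sub>m c" using c(2) by (simp add: pg_le_def)
    then have "dom g \<subseteq> dom c" by (rule map_le_implies_dom_le)
    then show "x \<in> dom c" using A g by blast
  qed
  have kc': "dom k \<subseteq> dom c" using F(3) UF by (rule subset_trans)
  have cs: "c \<subseteq>\<^sub>m s" using sup c(1) unfolding is_sup_in_def pg_le_def by blast
  have "pg_le k c" unfolding pg_le_def map_le_def
  proof
    fix x assume x: "x \<in> dom k"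
    have 1: "k x = s x" using ks x by (simp add: map_le_def)
    have "x \<in> dom c" using kc' x by blast
    then have "c x = s x" using cs by (simp add: map_le_def)
    then show "k x = c x" using 1 by simp
  qed
  then show "\<exists>d\<in>D. pg_le k d" using c by blast
qed

lemma lc_basis:
  assumes Hs: "Hausdorff_space X" and td: "totally_disconnected_space X"
    and lc: "locally_compact_space X" and W: "openin X W" and x: "x \<in> W"
  shows "\<exists>U. openin X U \<and> compactin X U \<and> x \<in> U \<and> U \<subseteq> W"
proof -
  have xt: "x \<in> topspace X" using W x openin_subset by blast
  obtain N K where NK: "openin X N" "compactin X K" "x \<in> N" "N \<subseteq> K"
    using lc xt unfolding locally_compact_space_def by blast
  define C where "C = connected_component_of_set X x"
  have "C \<subseteq> topspace X" "connectedin X C"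
    by (auto simp: C_def connected_component_of_subset_topspace connectedin_connected_component_of)
  then obtain a where "C \<subseteq> {a}" using td unfolding totally_disconnected_space_def by blast
  moreover have "x \<in> C" using xt by (simp add: C_def connected_component_of_refl)
  ultimately have Cx: "C = {x}" by blast
  have CC: "C \<in> connected_components_of X"
    using xt by (simp add: C_def connected_component_in_connected_components_of)
  have "compactin X C" using Cx xt by simp
  moreover have "openin X (W \<inter> N)" using W NK by (simp add: openin_Int)
  moreover have "C \<subseteq> W \<inter> N" using Cx x NK by auto
  ultimately obtain U V where UV: "openin X U" "openin X V" "disjnt U V" "U \<union> V = topspace X"
    "C \<subseteq> U" "U \<subseteq> W \<inter> N"
    using wilder_locally_compact_component_thm[OF lc Hs CC] by metis
  have "U = topspace X - V" using UV by (auto simp: disjnt_def)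
  then have "closedin X U" using UV by (simp add: closedin_diff)
  then have "compactin X U" using closed_compactin[OF NK(2)] UV NK by blast
  then show ?thesis using UV Cx by blast
qed

lemma alg_basis:
  assumes Hs: "Hausdorff_space X" and alg: "algebraic_in (sym_pseudogroup X) pg_le"
    and W: "openin X W" and x: "x \<in> W"
  shows "\<exists>U. openin X U \<and> compactin X U \<and> x \<in> U \<and> U \<subseteq> W"
proof -
  have iP: "idm W \<in> sym_pseudogroup X" using idm_in[OF W] .
  let ?K = "{k\<in>sym_pseudogroup X. compact_elem_in (sym_pseudogroup X) pg_le k \<and> pg_le k (idm W)}"
  have sup: "is_sup_in (sym_pseudogroup X) pg_le ?K (idm W)"
    using alg iP unfolding algebraic_in_def by blast
  have "x \<in> dom (idm W)" using x by (simp add: idm_def dom_def)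
  then obtain k where k: "k \<in> ?K" "x \<in> dom k" using sup_cover[OF Hs sup] by blast
  have "dom k \<subseteq> dom (idm W)" using k map_le_implies_dom_le unfolding pg_le_def by blast
  then have "dom k \<subseteq> W" by (auto simp: idm_def dom_def split: if_splits)
  moreover have "openin X (dom k)" using k by (simp add: sym_pseudogroup_def)
  moreover have "compactin X (dom k)" using k compact_dom by blast
  ultimately show ?thesis using k by blast
qed

theorem corollary5p12:
  fixes X :: "'a topology"
  assumes "Hausdorff_space X"
  shows "(totally_disconnected_space X \<and> locally_compact_space X) \<longleftrightarrow>
         algebraic_in (sym_pseudogroup X) pg_le"
proof
  assume alg: "algebraic_in (sym_pseudogroup X) pg_le"
  have lc: "locally_compact_space X"
    unfolding locally_compact_space_def
  proof
    fix x assume "x \<in> topspace X"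
    then obtain U where "openin X U" "compactin X U" "x \<in> U"
      using alg_basis[OF assms alg, of "topspace X" x] by auto
    then show "\<exists>U K. openin X U \<and> compactin X K \<and> x \<in> U \<and> U \<subseteq> K" by blast
  qed
  have td: "totally_disconnected_space X"
    unfolding totally_disconnected_space_def
  proof (intro allI impI)
    fix S assume S: "S \<subseteq> topspace X \<and> connectedin X S"
    show "\<exists>a. S \<subseteq> {a}"
    proof (cases "S = {}")
      case True then show ?thesis by blast
    next
      case False
      then obtain a where a: "a \<in> S" by blast
      have "S \<subseteq> {a}"
      proof
        fix b assume b: "b \<in> S"
        show "b \<in> {a}"
        proof (rule ccontr)
          assume ab: "b \<notin> {a}"
          have bt: "b \<in> topspace X" using S b by blast
          have "openin X (topspace X - {b})"
            using closedin_Hausdorff_singleton[OF assms bt] by blast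
          moreover have "a \<in> topspace X - {b}" using S a ab by auto
          ultimately obtain U where U: "openin X U" "compactin X U" "a \<in> U" "U \<subseteq> topspace X - {b}"
            using alg_basis[OF assms alg] by meson
          have "closedin X U" using compactin_imp_closedin[OF assms U(2)] .
          then have "S \<subseteq> U \<or> disjnt S U" using connectedin_clopen_cases S U(1) by blast
          then show False using U a b by (auto simp: disjnt_def)
        qed
      qed
      then show ?thesis by blast
    qed
  qed
  show "totally_disconnected_space X \<and> locally_compact_space X" using td lc by blast
next
  assume "totally_disconnected_space X \<and> locally_compact_space X"
  then have td: "totally_disconnected_space X" and lc: "locally_compact_space X" by auto
  show "algebraic_in (sym_pseudogroup X) pg_le"
    unfolding algebraic_in_def
  proof (intro ballI conjI)
    fix f assume fP: "f \<in> sym_pseudogroup X"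
    let ?K = "{k\<in>sym_pseudogroup X. compact_elem_in (sym_pseudogroup X) pg_le k \<and> pg_le k f}"
    have df: "openin X (dom f)" using fP by (simp add: sym_pseudogroup_def)
    have rK: "f |` V \<in> ?K" if "openin X V" "compactin X V" "V \<subseteq> dom f" for V
    proof -
      have "f |` V \<in> sym_pseudogroup X" using sp_restrict fP that by blast
      moreover have "dom (f |` V) = V" using that by auto
      ultimately have "compact_elem_in (sym_pseudogroup X) pg_le (f |` V)"
        using dom_compact[OF assms] that by metis
      moreover have "pg_le (f |` V) f" by (auto simp: pg_le_def map_le_def)
      ultimately show ?thesis using \<open>f |` V \<in> sym_pseudogroup X\<close> by blast
    qed
    show "directed_in (sym_pseudogroup X) pg_le ?K"
      unfolding directed_in_def
    proof (intro conjI ballI)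
      show "?K \<subseteq> sym_pseudogroup X" by blast
      have "f |` {} \<in> ?K" by (rule rK) auto
      then show "?K \<noteq> {}" by blast
      fix a b assume a: "a \<in> ?K" and b: "b \<in> ?K"
      have af: "a \<subseteq>\<^sub>m f" and bf: "b \<subseteq>\<^sub>m f" using a b by (auto simp: pg_le_def)
      have "compactin X (dom a)" "compactin X (dom b)" using a b compact_dom by blast+
      moreover have "openin X (dom a)" "openin X (dom b)" using a b by (auto simp: sym_pseudogroup_def)
      moreover have "dom a \<subseteq> dom f" "dom b \<subseteq> dom f" using af bf map_le_implies_dom_le by blast+
      ultimately have "f |` (dom a \<union> dom b) \<in> ?K"
        by (intro rK) (auto simp: compactin_Un openin_Un)
      moreover have "pg_le a (f |` (dom a \<union> dom b))" "pg_le b (f |` (dom a \<union> dom b))"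
        using af bf by (auto simp: pg_le_def map_le_def)
      ultimately show "\<exists>c\<in>?K. pg_le a c \<and> pg_le b c" by blast
    qed
    show "is_sup_in (sym_pseudogroup X) pg_le ?K f"
      unfolding is_sup_in_def
    proof (intro conjI ballI impI)
      show "f \<in> sym_pseudogroup X" by (rule fP)
      fix d assume "d \<in> ?K" then show "pg_le d f" by blast
    next
      fix u assume "u \<in> sym_pseudogroup X" and ub: "\<forall>d\<in>?K. pg_le d u"
      show "pg_le f u" unfolding pg_le_def map_le_def
      proof
        fix x assume x: "x \<in> dom f"
        then obtain V where V: "openin X V" "compactin X V" "x \<in> V" "V \<subseteq> dom f"
          using lc_basis[OF assms td lc df] by blast
        then have "pg_le (f |` V) u" using rK ub by blast
        then show "f x = u x" using x V unfolding pg_le_def map_le_def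
          by (metis domIff restrict_in)
      qed
    qed
  qed
qed

end
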